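(* Suppose the Lipschitz assumption holds. Then for each $t\in\mathbb N_T$ there exist constants $K^3_t,K^4_t>0$ such that for every $\gamma\in\mathcal G$ and all $z_1,z_2\in\mathcal I(\mathcal X)$, $$\|\hat f_t(z_1,\gamma)-\hat f_t(z_2,\gamma)\|_\infty\le K^3_t\|z_1-z_2\|_\infty,\qquad |\hat c_t(z_1,\gamma)-\hat c_t(z_2,\gamma)|\le K^4_t\|z_1-z_2\|_\infty.$$
   Context: Let $T\in\mathbb N$, $\mathbb N_T=\{1,\dots,T\}$, $\mathcal X,\mathcal U,\mathcal W$ finite sets, $\mathcal I(\mathcal X)=[0,1]^{\mathcal X}$. For each $t$, let $f_t:\mathcal X\times\mathcal U\times\mathcal W\times\mathcal I(\mathcal X)\to\mathcal X$, let $\mathbb P(w_t=\cdot)$ be a probability law on $\mathcal W$, and $\mathbb P(y|x,u,z)=\sum_w\mathbb 1(f_t(x,u,w,z)=y)\mathbb P(w_t=w)$; let $\ell_t:\mathcal X\times\mathcal U\times\mathcal I(\mathcal X)\to\mathbb R_{\ge0}$. Lipschitz assumption: constants $K^1_t,K^2_t>0$ with $|\mathbb P(y|x,u,z_1)-\mathbb P(y|x,u,z_2)|\le K^1_t\|z_1-z_2\|_\infty$ and $|\ell_t(x,u,z_1)-\ell_t(x,u,z_2)|\le K^2_t\|z_1-z_2\|_\infty$ for all $x,y\in\mathcal X$, $u\in\mathcal U$, $z_1,z_2\in\mathcal I(\mathcal X)$. $\mathcal G$ is the set of all maps $\gamma:\mathcal X\to\mathcal U$. For $z\in\mathcal I(\mathcal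 X)$: $\hat f_t(z,\gamma)(y)=\sum_{x\in\mathcal X}z(x)\mathbb P(y|x,\gamma(x),z)$, $y\in\mathcal X$, and $\hat c_t(z,\gamma)=\sum_x z(x)\ell_t(x,\gamma(x),z)$. *)

theory Defs
  imports "HOL-Analysis.Analysis"
begin

definition supnorm :: "('a::finite \<Rightarrow> real) \<Rightarrow> real" where
  "supnorm v = Max (range (\<lambda>x. \<bar>v x\<bar>))"

definition Iset :: "('a \<Rightarrow> real) set" where
  "Iset = {z. \<forall>x. 0 \<le> z x \<and> z x \<le> 1}"

definition trans_prob ::
  "(nat \<Rightarrow> 'x \<Rightarrow> 'u \<Rightarrow> 'w::finite \<Rightarrow> ('x \<Rightarrow> real) \<Rightarrow> 'x) \<Rightarrow> (nat \<Rightarrow> 'w \<Rightarrow> real)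
   \<Rightarrow> nat \<Rightarrow> 'x \<Rightarrow> 'x \<Rightarrow> 'u \<Rightarrow> ('x \<Rightarrow> real) \<Rightarrow> real" where
  "trans_prob f pw t y x u z = (\<Sum>w\<in>UNIV. (if f t x u w z = y then 1 else 0) * pw t w)"

definition fhat ::
  "(nat \<Rightarrow> 'x::finite \<Rightarrow> 'u \<Rightarrow> 'w::finite \<Rightarrow> ('x \<Rightarrow> real) \<Rightarrow> 'x) \<Rightarrow> (nat \<Rightarrow> 'w \<Rightarrow> real)
   \<Rightarrow> nat \<Rightarrow> ('x \<Rightarrow> real) \<Rightarrow> ('x \<Rightarrow> 'u) \<Rightarrow> ('x \<Rightarrow> real)" where
  "fhat f pw t z \<gamma> = (\<lambda>y. \<Sum>x\<in>UNIV. z x * trans_prob f pw t y x (\<gamma> x) z)"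

definition chat ::
  "(nat \<Rightarrow> 'x::finite \<Rightarrow> 'u \<Rightarrow> ('x \<Rightarrow> real) \<Rightarrow> real)
   \<Rightarrow> nat \<Rightarrow> ('x \<Rightarrow> real) \<Rightarrow> ('x \<Rightarrow> 'u) \<Rightarrow> real" where
  "chat l t z \<gamma> = (\<Sum>x\<in>UNIV. z x * l t x (\<gamma> x) z)"

end

theory Submission
  imports Defs
begin

lemma supnorm_ge: "\<bar>v x\<bar> \<le> supnorm (v::'a::finite \<Rightarrow> real)"
  unfolding supnorm_def by (rule Max_ge) auto

lemma supnorm_le: "(\<And>x. \<bar>v x\<bar> \<le> c) \<Longrightarrow> supnorm (v::'a::finite \<Rightarrow> real) \<le> c"
  unfolding supnorm_def by (subst Max_le_iff) auto

lemma supnorm_nonneg: "0 \<le> supnorm (v::'a::finite \<Rightarrow> real)"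
  using supnorm_ge[of v undefined] by linarith

lemma sum_bound:
  fixes g :: "'a::finite \<Rightarrow> real"
  assumes "\<And>x. \<bar>g x\<bar> \<le> c"
  shows "\<bar>\<Sum>x\<in>UNIV. g x\<bar> \<le> real CARD('a) * c"
proof -
  have "\<bar>\<Sum>x\<in>UNIV. g x\<bar> \<le> (\<Sum>x\<in>UNIV. \<bar>g x\<bar>)" by (rule sum_abs)
  also have "\<dots> \<le> (\<Sum>x\<in>(UNIV::'a set). c)" by (rule sum_mono) (use assms in auto)
  finally show ?thesis by simp
qed

lemma tp_bounds:
  assumes "\<And>w. pw t w \<ge> 0" "(\<Sum>w\<in>UNIV. pw t w) = 1"
  shows "0 \<le> trans_prob f pw t y x u z \<and> trans_prob f pw t y x u z \<le> 1"
proof -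
  have "trans_prob f pw t y x u z \<le> (\<Sum>w\<in>UNIV. pw t w)"
    unfolding trans_prob_def by (rule sum_mono) (use assms in auto)
  moreover have "0 \<le> trans_prob f pw t y x u z"
    unfolding trans_prob_def by (rule sum_nonneg) (use assms in auto)
  ultimately show ?thesis using assms by simp
qed

theorem lemma1:
  fixes T :: nat
    and f :: "nat \<Rightarrow> 'x::finite \<Rightarrow> 'u::finite \<Rightarrow> 'w::finite \<Rightarrow> ('x \<Rightarrow> real) \<Rightarrow> 'x"
    and pw :: "nat \<Rightarrow> 'w \<Rightarrow> real"
    and l :: "nat \<Rightarrow> 'x \<Rightarrow> 'u \<Rightarrow> ('x \<Rightarrow> real) \<Rightarrow> real"
  assumes pw_nonneg: "\<And>t w. t \<in> {1..T} \<Longrightarrow> pw t w \<ge> 0"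
    and pw_sum: "\<And>t. t \<in> {1..T} \<Longrightarrow> (\<Sum>w\<in>UNIV. pw t w) = 1"
    and l_nonneg: "\<And>t x u z. t \<in> {1..T} \<Longrightarrow> z \<in> Iset \<Longrightarrow> l t x u z \<ge> 0"
    and lipschitz: "\<And>t. t \<in> {1..T} \<Longrightarrow> \<exists>K1 K2. K1 > 0 \<and> K2 > 0 \<and>
        (\<forall>x y u z1 z2. z1 \<in> Iset \<longrightarrow> z2 \<in> Iset \<longrightarrow>
           \<bar>trans_prob f pw t y x u z1 - trans_prob f pw t y x u z2\<bar> \<le> K1 * supnorm (\<lambda>v. z1 v - z2 v)) \<and>
        (\<forall>x u z1 z2. z1 \<in> Iset \<longrightarrow> z2 \<in> Iset \<longrightarrow>
           \<bar>l t x u z1 - l t x u z2\<bar> \<le> K2 * supnorm (\<lambda>v. z1 v - z2 v))"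
  shows "\<forall>t \<in> {1..T}. \<exists>K3 K4. K3 > 0 \<and> K4 > 0 \<and>
        (\<forall>\<gamma> z1 z2. z1 \<in> Iset \<longrightarrow> z2 \<in> Iset \<longrightarrow>
           supnorm (\<lambda>y. fhat f pw t z1 \<gamma> y - fhat f pw t z2 \<gamma> y) \<le> K3 * supnorm (\<lambda>v. z1 v - z2 v) \<and>
           \<bar>chat l t z1 \<gamma> - chat l t z2 \<gamma>\<bar> \<le> K4 * supnorm (\<lambda>v. z1 v - z2 v))"
proof
  fix t assume t: "t \<in> {1..T}"
  obtain K1 K2 where K: "K1 > 0" "K2 > 0"
    and L1: "\<And>x y u z1 z2. z1 \<in> Iset \<Longrightarrow> z2 \<in> Iset \<Longrightarrow>
           \<bar>trans_prob f pw t y x u z1 - trans_prob f pw t y x u z2\<bar> \<le> K1 * supnorm (\<lambda>v. z1 v - z2 v)"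
    and L2: "\<And>x u z1 z2. z1 \<in> Iset \<Longrightarrow> z2 \<in> Iset \<Longrightarrow>
           \<bar>l t x u z1 - l t x u z2\<bar> \<le> K2 * supnorm (\<lambda>v. z1 v - z2 v)"
    using lipschitz[OF t] by blast
  define n where "n = real CARD('x)"
  have n: "n > 0" unfolding n_def by simp
  define M where "M = Max (range (\<lambda>(x,u). l t x u (\<lambda>_. 0)))"
  have M: "l t x u (\<lambda>_. 0) \<le> M" for x u
    unfolding M_def by (rule Max_ge) auto
  have z0: "(\<lambda>_. 0::real) \<in> Iset" unfolding Iset_def by simp
  have M0: "M \<ge> 0" using M[of undefined undefined] l_nonneg[OF t z0, of undefined undefined] by linarith
  have lb: "\<bar>l t x u z\<bar> \<le> M + K2" if z: "z \<in> Iset" for x u z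
  proof -
    have s: "supnorm (\<lambda>v. z v - 0) \<le> 1"
      by (rule supnorm_le) (use z in \<open>auto simp: Iset_def\<close>)
    have "\<bar>l t x u z - l t x u (\<lambda>_. 0)\<bar> \<le> K2 * supnorm (\<lambda>v. z v - 0)"
      using L2[OF z z0] by simp
    also have "\<dots> \<le> K2" using s K by (simp add: mult_left_le)
    finally show ?thesis using M[of x u] l_nonneg[OF t z] l_nonneg[OF t z0, of x u] by linarith
  qed
  have tp: "0 \<le> trans_prob f pw t y x u z \<and> trans_prob f pw t y x u z \<le> 1" for y x u z
    by (rule tp_bounds) (use pw_nonneg[OF t] pw_sum[OF t] in auto)
  show "\<exists>K3 K4. K3 > 0 \<and> K4 > 0 \<and>
        (\<forall>\<gamma> z1 z2. z1 \<in> Iset \<longrightarrow> z2 \<in> Iset \<longrightarrow>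
           supnorm (\<lambda>y. fhat f pw t z1 \<gamma> y - fhat f pw t z2 \<gamma> y) \<le> K3 * supnorm (\<lambda>v. z1 v - z2 v) \<and>
           \<bar>chat l t z1 \<gamma> - chat l t z2 \<gamma>\<bar> \<le> K4 * supnorm (\<lambda>v. z1 v - z2 v))"
  proof (intro exI conjI allI impI)
    show "n * (1 + K1) > 0" using n K by simp
    show "n * (M + 2 * K2) > 0" using n K M0 by simp
    fix \<gamma> :: "'x \<Rightarrow> 'u" and z1 z2 :: "'x \<Rightarrow> real"
    assume z1: "z1 \<in> Iset" and z2: "z2 \<in> Iset"
    define D where "D = supnorm (\<lambda>v. z1 v - z2 v)"
    have D0: "D \<ge> 0" unfolding D_def by (rule supnorm_nonneg)
    have dz: "\<bar>z1 x - z2 x\<bar> \<le> D" for x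
      unfolding D_def using supnorm_ge[of "\<lambda>v. z1 v - z2 v" x] by simp
    have z2b: "0 \<le> z2 x" "z2 x \<le> 1" for x using z2 by (auto simp: Iset_def)
    show "supnorm (\<lambda>y. fhat f pw t z1 \<gamma> y - fhat f pw t z2 \<gamma> y) \<le> n * (1 + K1) * D"
    proof (rule supnorm_le)
      fix y
      let ?P1 = "\<lambda>x. trans_prob f pw t y x (\<gamma> x) z1"
      let ?P2 = "\<lambda>x. trans_prob f pw t y x (\<gamma> x) z2"
      have eq: "fhat f pw t z1 \<gamma> y - fhat f pw t z2 \<gamma> y =
          (\<Sum>x\<in>UNIV. (z1 x - z2 x) * ?P1 x + z2 x * (?P1 x - ?P2 x))"
        unfolding fhat_def sum_subtractf[symmetric] by (rule sum.cong) (auto simp: algebra_simps)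
      have "\<bar>(z1 x - z2 x) * ?P1 x + z2 x * (?P1 x - ?P2 x)\<bar> \<le> (1 + K1) * D" for x
      proof -
        have p1: "\<bar>?P1 x\<bar> \<le> 1" using tp[of y x "\<gamma> x" z1] by linarith
        have a: "\<bar>(z1 x - z2 x) * ?P1 x\<bar> \<le> D * 1"
          unfolding abs_mult by (rule mult_mono) (use dz[of x] p1 D0 in auto)
        have l1: "\<bar>?P1 x - ?P2 x\<bar> \<le> K1 * D" unfolding D_def by (rule L1[OF z1 z2])
        have zz: "\<bar>z2 x\<bar> \<le> 1" using z2b[of x] by linarith
        have b: "\<bar>z2 x * (?P1 x - ?P2 x)\<bar> \<le> 1 * (K1 * D)"
          unfolding abs_mult by (rule mult_mono[OF zz l1]) auto
        have c: "\<bar>(z1 x - z2 x) * ?P1 x + z2 x * (?P1 x - ?P2 x)\<bar> \<le> \<bar>(z1 x - z2 x) * ?P1 x\<bar> + \<bar>z2 x * (?P1 x - ?P2 x)\<bar>"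
          by (rule abs_triangle_ineq)
        have "D * 1 + 1 * (K1 * D) = (1 + K1) * D" by (simp add: algebra_simps)
        then show ?thesis using a b c by linarith
      qed
      then have "\<bar>\<Sum>x\<in>UNIV. (z1 x - z2 x) * ?P1 x + z2 x * (?P1 x - ?P2 x)\<bar> \<le> n * ((1 + K1) * D)"
        unfolding n_def by (rule sum_bound)
      then show "\<bar>fhat f pw t z1 \<gamma> y - fhat f pw t z2 \<gamma> y\<bar> \<le> n * (1 + K1) * D"
        unfolding eq by (simp add: mult.assoc)
    qed
    show "\<bar>chat l t z1 \<gamma> - chat l t z2 \<gamma>\<bar> \<le> n * (M + 2 * K2) * D"
    proof -
      let ?P1 = "\<lambda>x. l t x (\<gamma> x) z1"
      let ?P2 = "\<lambda>x. l t x (\<gamma> x) z2"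
      have eq: "chat l t z1 \<gamma> - chat l t z2 \<gamma> =
          (\<Sum>x\<in>UNIV. (z1 x - z2 x) * ?P1 x + z2 x * (?P1 x - ?P2 x))"
        unfolding chat_def sum_subtractf[symmetric] by (rule sum.cong) (auto simp: algebra_simps)
      have "\<bar>(z1 x - z2 x) * ?P1 x + z2 x * (?P1 x - ?P2 x)\<bar> \<le> (M + 2 * K2) * D" for x
      proof -
        have p1: "\<bar>?P1 x\<bar> \<le> M + K2" by (rule lb[OF z1])
        have a: "\<bar>(z1 x - z2 x) * ?P1 x\<bar> \<le> D * (M + K2)"
          unfolding abs_mult by (rule mult_mono) (use dz[of x] p1 D0 in auto)
        have l1: "\<bar>?P1 x - ?P2 x\<bar> \<le> K2 * D" unfolding D_def by (rule L2[OF z1 z2])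
        have zz: "\<bar>z2 x\<bar> \<le> 1" using z2b[of x] by linarith
        have b: "\<bar>z2 x * (?P1 x - ?P2 x)\<bar> \<le> 1 * (K2 * D)"
          unfolding abs_mult by (rule mult_mono[OF zz l1]) (use K D0 in auto)
        have c: "\<bar>(z1 x - z2 x) * ?P1 x + z2 x * (?P1 x - ?P2 x)\<bar> \<le> \<bar>(z1 x - z2 x) * ?P1 x\<bar> + \<bar>z2 x * (?P1 x - ?P2 x)\<bar>"
          by (rule abs_triangle_ineq)
        have "D * (M + K2) + 1 * (K2 * D) \<le> (M + 2 * K2) * D" by (simp add: algebra_simps)
        then show ?thesis using a b c by linarith
      qed
      then have "\<bar>\<Sum>x\<in>UNIV. (z1 x - z2 x) * ?P1 x + z2 x * (?P1 x - ?P2 x)\<bar> \<le> n * ((M + 2 * K2) * D)"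
        unfolding n_def by (rule sum_bound)
      then show ?thesis
        unfolding eq by (simp add: mult.assoc)
    qed
  qed
qed

end
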